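(* For integers $r,k\ge0$ and real $\alpha$ with $\alpha>k>r$, $$\sum_{n=1}^\infty\frac{H_{n+\alpha}^2}{(n+r)(n+k)}=\frac1{k-r}\Bigg\{H_{\alpha-r}^3+H_{\alpha-r}H_{\alpha-r}^{(2)}+H_{\alpha-r}\zeta(2)-H_{\alpha-k}^3-H_{\alpha-k}H_{\alpha-k}^{(2)}-H_{\alpha-k}\zeta(2)$$ $$+(r-\alpha)\sum_{j=1}^r\frac{H_{\alpha+j-r}^2}{j(\alpha+j-r)}+\sum_{j=1}^{k-r}\frac{H_{\alpha+j-k}}{(\alpha+j-k)^2}-(k-\alpha)\sum_{j=1}^k\frac{H_{\alpha+j-k}^2}{j(\alpha+j-k)}\Bigg\}.$$
   Context: Shifted harmonic numbers: for a real $\alpha$ that is not a negative integer, $H_\alpha := \sum_{k=1}^\infty\left(\frac1k-\frac1{k+\alpha}\right)$ and, for integers $m\ge 2$, $H_\alpha^{(m)} := \sum_{k=1}^\infty\left(\frac1{k^m}-\frac1{(k+\alpha)^m}\right)=\zeta(m)-\zeta(m,\alpha+1)$, where $\zeta$ is the Riemann zeta function and $\zeta(s,\alpha+1)=\sum_{n=1}^\infty (n+\alpha)^{-s}$ is the Hurwitz zeta function. Powers such as $H_\alpha^2$ mean $(H_\alpha)^2$. Empty sums are $0$. *)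

theory Defs
  imports "HOL-Analysis.Analysis"
begin

definition shifted_harm :: "real \<Rightarrow> real" where
  "shifted_harm \<alpha> = (\<Sum>k. 1 / real (Suc k) - 1 / (real (Suc k) + \<alpha>))"

definition shifted_harm_gen :: "nat \<Rightarrow> real \<Rightarrow> real" where
  "shifted_harm_gen m \<alpha> = (\<Sum>k. 1 / real (Suc k) ^ m - 1 / (real (Suc k) + \<alpha>) ^ m)"

definition zeta_nat :: "nat \<Rightarrow> real" where
  "zeta_nat m = (\<Sum>n. 1 / real (Suc n) ^ m)"

end

theory Submission
  imports Defs "HOL-Real_Asymp.Real_Asymp"
begin


lemma summable_inv_sq: "summable (\<lambda>k. 1 / real (Suc k) ^ 2)"
proof -
  have "summable (\<lambda>n. inverse (real n ^ 2))" by (rule inverse_power_summable) auto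
  hence "summable (\<lambda>k. inverse (real (Suc k) ^ 2))"
    using summable_iff_shift[of "\<lambda>n. inverse (real n ^ 2)" 1] by simp
  thus ?thesis by (simp add: field_simps)
qed

lemma sums_H:
  assumes "x \<ge> 0"
  shows "(\<lambda>k. 1 / real (Suc k) - 1 / (real (Suc k) + x)) sums shifted_harm x"
proof -
  have "summable (\<lambda>k. 1 / real (Suc k) - 1 / (real (Suc k) + x))"
  proof (rule summable_comparison_test[OF _ summable_mult[OF summable_inv_sq, of x]])
    show "\<exists>N. \<forall>n\<ge>N. norm (1 / real (Suc n) - 1 / (real (Suc n) + x)) \<le> x * (1 / real (Suc n) ^ 2)"
    proof (intro exI allI impI)
      fix n :: nat
      have e: "1 / real (Suc n) - 1 / (real (Suc n) + x) = x / (real (Suc n) * (real (Suc n) + x))"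
        using assms by (simp add: field_simps)
      have "x / (real (Suc n) * (real (Suc n) + x)) \<le> x / (real (Suc n) * real (Suc n))"
        using assms by (intro divide_left_mono mult_mono) auto
      moreover have "x / (real (Suc n) * (real (Suc n) + x)) \<ge> 0" using assms by simp
      ultimately have "norm (x / (real (Suc n) * (real (Suc n) + x))) \<le> x * (1 / real (Suc n) ^ 2)"
        by (simp only: real_norm_def abs_of_nonneg) (simp add: power2_eq_square del: of_nat_Suc)
      thus "norm (1 / real (Suc n) - 1 / (real (Suc n) + x)) \<le> x * (1 / real (Suc n) ^ 2)"
        by (simp only: e)
    qed
  qed
  thus ?thesis by (simp add: shifted_harm_def summable_sums)
qed

lemma sums_H2:
  assumes "x \<ge> 0"
  shows "(\<lambda>k. 1 / real (Suc k) ^ 2 - 1 / (real (Suc k) + x) ^ 2) sums shifted_harm_gen 2 x"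
proof -
  have "summable (\<lambda>k. 1 / real (Suc k) ^ 2 - 1 / (real (Suc k) + x) ^ 2)"
  proof (rule summable_comparison_test[OF _ summable_inv_sq])
    show "\<exists>N. \<forall>n\<ge>N. norm (1 / real (Suc n) ^ 2 - 1 / (real (Suc n) + x) ^ 2) \<le> 1 / real (Suc n) ^ 2"
    proof (intro exI allI impI)
      fix n :: nat
      have "1 / (real (Suc n) + x) ^ 2 \<le> 1 / real (Suc n) ^ 2"
        using assms by (intro divide_left_mono power_mono) auto
      thus "norm (1 / real (Suc n) ^ 2 - 1 / (real (Suc n) + x) ^ 2) \<le> 1 / real (Suc n) ^ 2"
        by simp
    qed
  qed
  thus ?thesis by (simp add: shifted_harm_gen_def summable_sums)
qed

lemma sums_Z: "(\<lambda>k. 1 / real (Suc k) ^ 2) sums zeta_nat 2"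
  using summable_inv_sq by (simp add: zeta_nat_def summable_sums)

lemma sums_inv_sq_shift:
  assumes "x \<ge> 0"
  shows "(\<lambda>k. 1 / (real (Suc k) + x) ^ 2) sums (zeta_nat 2 - shifted_harm_gen 2 x)"
  using sums_diff[OF sums_Z sums_H2[OF assms]] by simp

lemma H_Suc:
  assumes "x \<ge> 0"
  shows "shifted_harm (x + 1) = shifted_harm x + 1 / (x + 1)"
proof -
  have t: "(\<lambda>k. (-1 / (real k + 1 + x)) - (-1 / (real (Suc k) + 1 + x))) sums (-1 / (real 0 + 1 + x) - 0)"
    by (rule telescope_sums') real_asymp
  have d: "(\<lambda>k. (1 / real (Suc k) - 1 / (real (Suc k) + (x + 1))) - (1 / real (Suc k) - 1 / (real (Suc k) + x)))
      sums (shifted_harm (x + 1) - shifted_harm x)"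
    using sums_diff[OF sums_H[of "x+1"] sums_H[OF assms]] assms by simp
  have "(\<lambda>k. (1 / real (Suc k) - 1 / (real (Suc k) + (x + 1))) - (1 / real (Suc k) - 1 / (real (Suc k) + x)))
      = (\<lambda>k. - ((-1 / (real k + 1 + x)) - (-1 / (real (Suc k) + 1 + x))))"
    by (auto simp: algebra_simps)
  with d have "(\<lambda>k. - ((-1 / (real k + 1 + x)) - (-1 / (real (Suc k) + 1 + x)))) sums (shifted_harm (x + 1) - shifted_harm x)"
    by simp
  moreover have "(\<lambda>k. - ((-1 / (real k + 1 + x)) - (-1 / (real (Suc k) + 1 + x)))) sums (1 / (x + 1))"
    using sums_minus[OF t] by (simp add: add_ac)
  ultimately show ?thesis using sums_unique2 by fastforce
qed

lemma H2_Suc: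
  assumes "x \<ge> 0"
  shows "shifted_harm_gen 2 (x + 1) = shifted_harm_gen 2 x + 1 / (x + 1) ^ 2"
proof -
  have t: "(\<lambda>k. (-1 / (real k + 1 + x)^2) - (-1 / (real (Suc k) + 1 + x)^2)) sums (-1 / (real 0 + 1 + x)^2 - 0)"
    by (rule telescope_sums') real_asymp
  have d: "(\<lambda>k. (1 / real (Suc k)^2 - 1 / (real (Suc k) + (x + 1))^2) - (1 / real (Suc k)^2 - 1 / (real (Suc k) + x)^2))
      sums (shifted_harm_gen 2 (x + 1) - shifted_harm_gen 2 x)"
    using sums_diff[OF sums_H2[of "x+1"] sums_H2[OF assms]] assms by simp
  have "(\<lambda>k. (1 / real (Suc k)^2 - 1 / (real (Suc k) + (x + 1))^2) - (1 / real (Suc k)^2 - 1 / (real (Suc k) + x)^2))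
      = (\<lambda>k. - ((-1 / (real k + 1 + x)^2) - (-1 / (real (Suc k) + 1 + x)^2)))"
    by (auto simp: algebra_simps)
  with d have "(\<lambda>k. - ((-1 / (real k + 1 + x)^2) - (-1 / (real (Suc k) + 1 + x)^2))) sums (shifted_harm_gen 2 (x + 1) - shifted_harm_gen 2 x)"
    by simp
  moreover have "(\<lambda>k. - ((-1 / (real k + 1 + x)^2) - (-1 / (real (Suc k) + 1 + x)^2))) sums (1 / (x + 1)^2)"
    using sums_minus[OF t] by (simp add: add_ac)
  ultimately show ?thesis using sums_unique2 by fastforce
qed

lemma H_0: "shifted_harm 0 = 0"
  by (simp add: shifted_harm_def)

lemma H2_0: "shifted_harm_gen 2 0 = 0"
  by (simp add: shifted_harm_gen_def)

lemma H_mono: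
  assumes "0 \<le> x" "x \<le> y"
  shows "shifted_harm x \<le> shifted_harm y"
  unfolding shifted_harm_def
proof (rule suminf_le)
  show "summable (\<lambda>k. 1 / real (Suc k) - 1 / (real (Suc k) + x))"
    using sums_H[OF assms(1)] sums_summable by blast
  show "summable (\<lambda>k. 1 / real (Suc k) - 1 / (real (Suc k) + y))"
    using sums_H[of y] assms sums_summable by force
  fix n
  show "1 / real (Suc n) - 1 / (real (Suc n) + x) \<le> 1 / real (Suc n) - 1 / (real (Suc n) + y)"
    using assms by (simp add: frac_le)
qed

lemma H2_mono:
  assumes "0 \<le> x" "x \<le> y"
  shows "shifted_harm_gen 2 x \<le> shifted_harm_gen 2 y"
  unfolding shifted_harm_gen_def
proof (rule suminf_le)
  show "summable (\<lambda>k. 1 / real (Suc k)^2 - 1 / (real (Suc k) + x)^2)"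
    using sums_H2[OF assms(1)] sums_summable by blast
  show "summable (\<lambda>k. 1 / real (Suc k)^2 - 1 / (real (Suc k) + y)^2)"
    using sums_H2[of y] assms sums_summable by force
  fix n
  have "1 / (real (Suc n) + y)^2 \<le> 1 / (real (Suc n) + x)^2"
    using assms by (intro divide_left_mono power_mono) auto
  thus "1 / real (Suc n)^2 - 1 / (real (Suc n) + x)^2 \<le> 1 / real (Suc n)^2 - 1 / (real (Suc n) + y)^2"
    by simp
qed

lemma H_nonneg: "x \<ge> 0 \<Longrightarrow> shifted_harm x \<ge> 0"
  using H_mono[of 0 x] H_0 by simp

lemma H2_nonneg: "x \<ge> 0 \<Longrightarrow> shifted_harm_gen 2 x \<ge> 0"
  using H2_mono[of 0 x] H2_0 by simp

lemma H_nat: "shifted_harm (real n) = harm n"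
proof (induction n)
  case 0 then show ?case by (simp add: H_0 harm_altdef)
next
  case (Suc n)
  have "shifted_harm (real (Suc n)) = shifted_harm (real n + 1)" by (simp add: add.commute)
  also have "\<dots> = harm n + 1 / (real n + 1)" using H_Suc[of "real n"] Suc by simp
  also have "\<dots> = harm (Suc n)" by (simp add: harm_Suc field_simps)
  finally show ?case .
qed

lemma harm_le_ln: "n > 0 \<Longrightarrow> harm n \<le> ln (real n) + (1::real)"
  using euler_mascheroni_sequence_decreasing[of 1 n] by (simp add: harm_def)

lemma H_le_ln:
  assumes "x \<ge> 0"
  shows "shifted_harm x \<le> 1 + ln (x + 2)"
proof -
  define N where "N = nat \<lceil>x\<rceil> + 1"
  have N1: "x \<le> real N" "real N \<le> x + 2" "N > 0"
    unfolding N_def using assms by linarith+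
  have "shifted_harm x \<le> shifted_harm (real N)" using H_mono assms N1 by simp
  also have "\<dots> = harm N" by (rule H_nat)
  also have "\<dots> \<le> ln (real N) + 1" using harm_le_ln N1 by simp
  also have "ln (real N) \<le> ln (x + 2)" using N1 by simp
  finally show ?thesis by simp
qed

lemma H_bound:
  assumes "y \<ge> 0"
  shows "shifted_harm (real p + y) \<le> (1 + ln (y + 2)) + ln (real p + 1)"
proof -
  have "shifted_harm (real p + y) \<le> 1 + ln (real p + y + 2)" using H_le_ln assms by simp
  also have "ln (real p + y + 2) \<le> ln ((real p + 1) * (y + 2))"
    using assms by (intro ln_mono) (auto simp: algebra_simps)
  also have "\<dots> = ln (real p + 1) + ln (y + 2)" using assms by (simp add: ln_mult)
  finally show ?thesis by simp
qed


lemma summable_pow32: "summable (\<lambda>n. norm (real n powr (-3/2)))"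
  using summable_real_powr_iff[of "-3/2"] by simp

lemma summable_ln_sq:
  assumes "c \<ge> 0"
  shows "summable (\<lambda>p. (c + ln (real p + 2))^2 / (real p + 1)^2)"
proof -
  have s1: "summable (\<lambda>p. 1 / (real p + 1)^2)"
    using summable_inv_sq by (simp add: add.commute)
  have s2: "summable (\<lambda>p. ln (real p + 2) / (real p + 1)^2)"
    by (rule summable_comparison_test_bigo[OF summable_pow32]) real_asymp
  have s3: "summable (\<lambda>p. ln (real p + 2)^2 / (real p + 1)^2)"
    by (rule summable_comparison_test_bigo[OF summable_pow32]) real_asymp
  have "summable (\<lambda>p. c^2 * (1 / (real p + 1)^2) + 2 * c * (ln (real p + 2) / (real p + 1)^2)
          + ln (real p + 2)^2 / (real p + 1)^2)"
    by (intro summable_add summable_mult s1 s2 s3)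
  moreover have "(\<lambda>p. (c + ln (real p + 2))^2 / (real p + 1)^2) = (\<lambda>p. c^2 * (1 / (real p + 1)^2) + 2 * c * (ln (real p + 2) / (real p + 1)^2)
          + ln (real p + 2)^2 / (real p + 1)^2)"
    unfolding power2_sum by (simp add: add_divide_distrib add_ac)
  ultimately show ?thesis by simp
qed

lemma lim_ln_sq:
  shows "(\<lambda>p. (c + ln (real p + 2))^2 / (real p + 1)) \<longlonglongrightarrow> 0"
proof -
  have t1: "(\<lambda>p. 1 / (real p + 1)) \<longlonglongrightarrow> 0" by real_asymp
  have t2: "(\<lambda>p. ln (real p + 2) / (real p + 1)) \<longlonglongrightarrow> 0" by real_asymp
  have t3: "(\<lambda>p. ln (real p + 2)^2 / (real p + 1)) \<longlonglongrightarrow> 0" by real_asymp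
  have "(\<lambda>p. c^2 * (1 / (real p + 1)) + 2 * c * (ln (real p + 2) / (real p + 1))
          + ln (real p + 2)^2 / (real p + 1)) \<longlonglongrightarrow> c^2 * 0 + 2 * c * 0 + 0"
    by (intro tendsto_add tendsto_mult tendsto_const t1 t2 t3)
  moreover have "(\<lambda>p. (c + ln (real p + 2))^2 / (real p + 1)) = (\<lambda>p. c^2 * (1 / (real p + 1)) + 2 * c * (ln (real p + 2) / (real p + 1))
          + ln (real p + 2)^2 / (real p + 1))"
    unfolding power2_sum by (simp add: add_divide_distrib add_ac)
  ultimately show ?thesis by simp
qed

definition cb :: "real \<Rightarrow> real" where "cb y = 1 + ln (y + 2)"

lemma cb_ge1: "y \<ge> 0 \<Longrightarrow> cb y \<ge> 1"
  by (simp add: cb_def)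

lemma H_bound':
  assumes "y \<ge> 0"
  shows "shifted_harm (real (Suc k) + y) \<le> cb y + ln (real k + 2)"
  using H_bound[OF assms, of "Suc k"] by (simp add: cb_def add_ac)

lemma H_bound_sq:
  assumes "y \<ge> 0"
  shows "shifted_harm (real (Suc k) + y) \<le> (cb y + ln (real k + 2))^2"
    and "shifted_harm (real (Suc k) + y)^2 \<le> (cb y + ln (real k + 2))^2"
proof -
  have h0: "0 \<le> shifted_harm (real (Suc k) + y)" using H_nonneg assms by simp
  have "0 \<le> ln (real k + 2)" by (intro ln_ge_zero) simp
  hence c1: "1 \<le> cb y + ln (real k + 2)" using cb_ge1[OF assms] by linarith
  have "cb y + ln (real k + 2) \<le> (cb y + ln (real k + 2))^2"
    using c1 by (simp add: power2_eq_square)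
  thus "shifted_harm (real (Suc k) + y) \<le> (cb y + ln (real k + 2))^2"
    using H_bound'[OF assms, of k] by linarith
  show "shifted_harm (real (Suc k) + y)^2 \<le> (cb y + ln (real k + 2))^2"
    using H_bound'[OF assms, of k] h0 by (intro power_mono) auto
qed

lemma summable_weighted:
  assumes "y \<ge> 0" "\<And>k. 0 \<le> f k" "\<And>k. f k \<le> (cb y + ln (real k + 2))^2"
  shows "summable (\<lambda>k. f k * (1 / real (Suc k) - 1 / (real (Suc k) + y)))"
proof (rule summable_comparison_test[OF _ summable_mult[OF summable_ln_sq[of "cb y"], of y]])
  show "0 \<le> cb y" using cb_ge1[OF assms(1)] by simp
  show "\<exists>N. \<forall>n\<ge>N. norm (f n * (1 / real (Suc n) - 1 / (real (Suc n) + y)))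
      \<le> y * ((cb y + ln (real n + 2))\<^sup>2 / (real n + 1)\<^sup>2)"
  proof (intro exI allI impI)
    fix n :: nat
    have e: "1 / real (Suc n) - 1 / (real (Suc n) + y) = y / (real (Suc n) * (real (Suc n) + y))"
      using assms by (simp add: field_simps)
    have w0: "0 \<le> y / (real (Suc n) * (real (Suc n) + y))" using assms by simp
    have w1: "y / (real (Suc n) * (real (Suc n) + y)) \<le> y / (real n + 1)^2"
      using assms by (intro divide_left_mono) (auto simp: power2_eq_square intro!: mult_mono)
    have "f n * (y / (real (Suc n) * (real (Suc n) + y))) \<le> (cb y + ln (real n + 2))^2 * (y / (real n + 1)^2)"
      by (intro mult_mono w0 w1 assms) simp
    also have "\<dots> = y * ((cb y + ln (real n + 2))\<^sup>2 / (real n + 1)\<^sup>2)" by simp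
    finally have Q: "f n * (y / (real (Suc n) * (real (Suc n) + y))) \<le> y * ((cb y + ln (real n + 2))\<^sup>2 / (real n + 1)\<^sup>2)" .
    have P: "0 \<le> f n * (y / (real (Suc n) * (real (Suc n) + y)))" using w0 assms by simp
    from P Q show "norm (f n * (1 / real (Suc n) - 1 / (real (Suc n) + y)))
      \<le> y * ((cb y + ln (real n + 2))\<^sup>2 / (real n + 1)\<^sup>2)"
      unfolding e real_norm_def by (simp only: abs_of_nonneg)
  qed
qed

lemma lim_weighted:
  assumes "y \<ge> 0" "\<And>k. 0 \<le> f k" "\<And>k. f k \<le> (cb y + ln (real k + 2))^2"
  shows "(\<lambda>k. f k / (real (Suc k) + y)) \<longlonglongrightarrow> 0"
proof (rule tendsto_sandwich[OF _ _ tendsto_const lim_ln_sq[of "cb y"]])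
  show "\<forall>\<^sub>F n in sequentially. 0 \<le> f n / (real (Suc n) + y)" using assms by simp
  show "\<forall>\<^sub>F n in sequentially. f n / (real (Suc n) + y) \<le> (cb y + ln (real n + 2))\<^sup>2 / (real n + 1)"
  proof (intro always_eventually allI)
    fix n
    have "f n / (real (Suc n) + y) \<le> f n / (real n + 1)"
      using assms by (intro divide_left_mono) auto
    also have "\<dots> \<le> (cb y + ln (real n + 2))\<^sup>2 / (real n + 1)"
      using assms by (intro divide_right_mono) auto
    finally show "f n / (real (Suc n) + y) \<le> (cb y + ln (real n + 2))\<^sup>2 / (real n + 1)" .
  qed
qed

lemma summable_A:
  assumes "y \<ge> 0"
  shows "summable (\<lambda>k. shifted_harm (real (Suc k) + y) * (1 / real (Suc k) - 1 / (real (Suc k) + y)))"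
  using assms by (intro summable_weighted H_bound_sq H_nonneg) auto

lemma summable_Phi:
  assumes "y \<ge> 0"
  shows "summable (\<lambda>k. shifted_harm (real (Suc k) + y)^2 * (1 / real (Suc k) - 1 / (real (Suc k) + y)))"
  using assms by (intro summable_weighted H_bound_sq) auto

lemma lim_A:
  assumes "y \<ge> 0"
  shows "(\<lambda>k. shifted_harm (real (Suc k) + y) / (real (Suc k) + y)) \<longlonglongrightarrow> 0"
  using assms by (intro lim_weighted H_bound_sq H_nonneg) auto

lemma lim_Phi:
  assumes "y \<ge> 0"
  shows "(\<lambda>k. shifted_harm (real (Suc k) + y)^2 / (real (Suc k) + y)) \<longlonglongrightarrow> 0"
  using assms by (intro lim_weighted H_bound_sq) auto


definition AA :: "real \<Rightarrow> real" where
  "AA y = (\<Sum>k. shifted_harm (real (Suc k) + y) * (1 / real (Suc k) - 1 / (real (Suc k) + y)))"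

definition BB :: "real \<Rightarrow> real" where
  "BB y = shifted_harm y ^ 2 + shifted_harm_gen 2 y"

lemma AA_Suc:
  assumes "y \<ge> 0"
  shows "AA (y + 1) = AA y + 2 * shifted_harm (y + 1) / (y + 1)"
proof -
  define g where "g k = shifted_harm (real (Suc k) + y) / (real (Suc k) + y)" for k
  have s1: "(\<lambda>k. (1 / real (Suc k) - 1 / (real (Suc k) + (y + 1))) / (y + 1)) sums (shifted_harm (y + 1) / (y + 1))"
    using sums_divide[OF sums_H[of "y+1"]] assms by simp
  have s2: "(\<lambda>k. g k - g (Suc k)) sums (g 0 - 0)"
    unfolding g_def by (rule telescope_sums') (rule lim_A[OF assms])
  have g0: "g 0 = shifted_harm (y + 1) / (y + 1)" by (simp add: g_def add_ac)
  have s3: "(\<lambda>k. (1 / real (Suc k) - 1 / (real (Suc k) + (y + 1))) / (y + 1) + (g k - g (Suc k)))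
      sums (2 * shifted_harm (y + 1) / (y + 1))"
    using sums_add[OF s1 s2] g0 by simp
  have eq: "(1 / real (Suc k) - 1 / (real (Suc k) + (y + 1))) / (y + 1) + (g k - g (Suc k))
      = shifted_harm (real (Suc k) + (y + 1)) * (1 / real (Suc k) - 1 / (real (Suc k) + (y + 1)))
        - shifted_harm (real (Suc k) + y) * (1 / real (Suc k) - 1 / (real (Suc k) + y))" for k
  proof -
    define a where "a = real (Suc k)"
    define h where "h = shifted_harm (a + y)"
    have a0: "a > 0" by (simp add: a_def)
    have h1: "shifted_harm (a + (y + 1)) = h + 1 / (a + y + 1)"
      using H_Suc[of "a + y"] a0 assms by (simp add: h_def add_ac)
    have g1: "g k = h / (a + y)" by (simp add: g_def h_def a_def)
    have g2: "g (Suc k) = shifted_harm (a + (y + 1)) / (a + y + 1)"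
      by (simp add: g_def a_def add_ac)
    have n: "a \<noteq> 0" "a + y \<noteq> 0" "1 + (a + y) \<noteq> 0" "1 + y \<noteq> 0" using a0 assms by linarith+
    show ?thesis
      unfolding a_def[symmetric] h_def[symmetric] g1 g2 h1
      using n by (simp add: divide_simps add_ac) algebra
  qed
  have s4: "(\<lambda>k. shifted_harm (real (Suc k) + (y + 1)) * (1 / real (Suc k) - 1 / (real (Suc k) + (y + 1)))
        - shifted_harm (real (Suc k) + y) * (1 / real (Suc k) - 1 / (real (Suc k) + y))) sums (AA (y + 1) - AA y)"
    unfolding AA_def
    by (intro sums_diff summable_sums summable_A) (use assms in auto)
  from s3 s4 eq have "AA (y + 1) - AA y = 2 * shifted_harm (y + 1) / (y + 1)"
    using sums_unique2 by (metis (no_types, lifting) ext)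
  thus ?thesis by simp
qed

lemma BB_Suc:
  assumes "y \<ge> 0"
  shows "BB (y + 1) = BB y + 2 * shifted_harm (y + 1) / (y + 1)"
proof -
  have n: "1 + y \<noteq> 0" using assms by linarith
  show ?thesis
  unfolding BB_def H_Suc[OF assms] H2_Suc[OF assms]
  using n by (simp add: divide_simps add_ac) algebra
qed

lemma AA_0: "AA 0 = 0" by (simp add: AA_def)
lemma BB_0: "BB 0 = 0" by (simp add: BB_def H_0 H2_0)

lemma AA_mono:
  assumes "0 \<le> x" "x \<le> y"
  shows "AA x \<le> AA y"
  unfolding AA_def
proof (rule suminf_le)
  show "summable (\<lambda>k. shifted_harm (real (Suc k) + x) * (1 / real (Suc k) - 1 / (real (Suc k) + x)))"
    using summable_A assms by simp
  show "summable (\<lambda>k. shifted_harm (real (Suc k) + y) * (1 / real (Suc k) - 1 / (real (Suc k) + y)))"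
    using summable_A assms by simp
  fix n
  show "shifted_harm (real (Suc n) + x) * (1 / real (Suc n) - 1 / (real (Suc n) + x))
      \<le> shifted_harm (real (Suc n) + y) * (1 / real (Suc n) - 1 / (real (Suc n) + y))"
    using assms by (intro mult_mono H_mono H_nonneg) (auto simp: frac_le)
qed

lemma BB_mono:
  assumes "0 \<le> x" "x \<le> y"
  shows "BB x \<le> BB y"
  unfolding BB_def
  using assms H_mono[OF assms] H2_mono[OF assms] H_nonneg[OF assms(1)]
  by (intro add_mono power_mono) auto

lemma AB_shift:
  assumes "y \<ge> 0"
  shows "AA (y + real n) - BB (y + real n) = AA y - BB y"
proof (induction n)
  case 0 then show ?case by simp
next
  case (Suc n)
  have "y + real (Suc n) = (y + real n) + 1" by simp
  then show ?case using AA_Suc[of "y + real n"] BB_Suc[of "y + real n"] Suc assms by (simp only:)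
qed

lemma AB_nat: "AA (real n) = BB (real n)"
  using AB_shift[of 0 n] AA_0 BB_0 by simp

lemma AA_eq_BB:
  assumes "y \<ge> 0"
  shows "AA y = BB y"
proof -
  define m where "m = nat \<lfloor>y\<rfloor>"
  have m: "real m \<le> y" "y \<le> real m + 1" unfolding m_def using assms by linarith+
  define u where "u n = 2 * (shifted_harm (real (Suc n) + real m) / (real (Suc n) + real m))" for n
  have u: "u \<longlonglongrightarrow> 2 * 0" unfolding u_def by (intro tendsto_mult tendsto_const lim_A) simp
  have bnd: "\<bar>AA y - BB y\<bar> \<le> u n" for n
  proof -
    define z where "z = y + real n"
    define M where "M = real m + real n"
    have zM: "M \<le> z" "z \<le> M + 1" "0 \<le> M" using m assms by (auto simp: z_def M_def)
    have Mn: "M = real (m + n)" by (simp add: M_def)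
    have BS: "BB (M + 1) = BB M + u n"
      using BB_Suc[OF zM(3)] by (simp add: u_def M_def add_ac)
    have A1: "AA M = BB M" "AA (M + 1) = BB (M + 1)"
      using AB_nat[of "m+n"] AB_nat[of "Suc (m+n)"] by (simp_all add: Mn add_ac)
    have "AA z \<le> AA (M + 1)" "AA M \<le> AA z" "BB z \<le> BB (M + 1)" "BB M \<le> BB z"
      using zM by (auto intro!: AA_mono BB_mono)
    hence "\<bar>AA z - BB z\<bar> \<le> u n" using BS A1 by linarith
    moreover have "AA z - BB z = AA y - BB y" unfolding z_def by (rule AB_shift[OF assms])
    ultimately show ?thesis by simp
  qed
  have "\<bar>AA y - BB y\<bar> \<le> 2 * 0"
    by (rule LIMSEQ_le_const[OF u]) (use bnd in auto)
  thus ?thesis by simp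
qed


definition PP :: "real \<Rightarrow> real" where
  "PP x = (\<Sum>k. shifted_harm (real (Suc k) + x)^2 * (1 / real (Suc k) - 1 / (real (Suc k) + x)))"

definition DD :: "real \<Rightarrow> real" where
  "DD t = shifted_harm t ^ 3 + shifted_harm t * shifted_harm_gen 2 t + shifted_harm t * zeta_nat 2"

lemma PP_Suc:
  assumes "x \<ge> 0"
  shows "PP (x + 1) = PP x + DD (x + 1) - DD x + shifted_harm (x + 1) / (x + 1)^2"
proof -
  define y where "y = x + 1"
  have y0: "y > 0" "y \<ge> 0" using assms by (simp_all add: y_def)
  define g where "g k = shifted_harm (real (Suc k) + x)^2 / (real (Suc k) + x)" for k
  have s1: "(\<lambda>k. 2 * (shifted_harm (real (Suc k) + y) * (1 / real (Suc k) - 1 / (real (Suc k) + y))) / y)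
      sums (2 * AA y / y)"
    unfolding AA_def by (intro sums_divide sums_mult summable_sums summable_A y0)
  have s2: "(\<lambda>k. ((1 / real (Suc k) - 1 / (real (Suc k) + y)) / y - 1 / (real (Suc k) + y)^2) / y)
      sums ((shifted_harm y / y - (zeta_nat 2 - shifted_harm_gen 2 y)) / y)"
    by (intro sums_divide sums_diff sums_H sums_inv_sq_shift y0)
  have s3: "(\<lambda>k. g k - g (Suc k)) sums (g 0 - 0)"
    unfolding g_def by (rule telescope_sums') (rule lim_Phi[OF assms])
  have g0: "g 0 = shifted_harm y ^ 2 / y" by (simp add: g_def y_def add_ac)
  have s4: "(\<lambda>k. 2 * (shifted_harm (real (Suc k) + y) * (1 / real (Suc k) - 1 / (real (Suc k) + y))) / y
      - ((1 / real (Suc k) - 1 / (real (Suc k) + y)) / y - 1 / (real (Suc k) + y)^2) / y + (g k - g (Suc k)))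
      sums (2 * AA y / y - (shifted_harm y / y - (zeta_nat 2 - shifted_harm_gen 2 y)) / y + shifted_harm y ^ 2 / y)"
    using sums_add[OF sums_diff[OF s1 s2] s3] g0 by simp
  have eq: "2 * (shifted_harm (real (Suc k) + y) * (1 / real (Suc k) - 1 / (real (Suc k) + y))) / y
      - ((1 / real (Suc k) - 1 / (real (Suc k) + y)) / y - 1 / (real (Suc k) + y)^2) / y + (g k - g (Suc k))
      = shifted_harm (real (Suc k) + (x + 1))^2 * (1 / real (Suc k) - 1 / (real (Suc k) + (x + 1)))
        - shifted_harm (real (Suc k) + x)^2 * (1 / real (Suc k) - 1 / (real (Suc k) + x))" for k
  proof -
    define a where "a = real (Suc k)"
    define h where "h = shifted_harm (a + x)"
    have a0: "a > 0" by (simp add: a_def)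
    have h1: "shifted_harm (a + (x + 1)) = h + 1 / (a + x + 1)"
      using H_Suc[of "a + x"] a0 assms by (simp add: h_def add_ac)
    have g1: "g k = h^2 / (a + x)" by (simp add: g_def h_def a_def)
    have g2: "g (Suc k) = shifted_harm (a + (x + 1))^2 / (a + x + 1)"
      by (simp add: g_def a_def add_ac)
    have n: "a \<noteq> 0" "a + x \<noteq> 0" "1 + (a + x) \<noteq> 0" "1 + x \<noteq> 0" using a0 assms by linarith+
    show ?thesis
      unfolding a_def[symmetric] h_def[symmetric] g1 g2 h1 y_def
      using n by (simp add: divide_simps add_ac) algebra
  qed
  have s5: "(\<lambda>k. shifted_harm (real (Suc k) + (x + 1))^2 * (1 / real (Suc k) - 1 / (real (Suc k) + (x + 1)))
        - shifted_harm (real (Suc k) + x)^2 * (1 / real (Suc k) - 1 / (real (Suc k) + x))) sums (PP (x + 1) - PP x)"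
    unfolding PP_def
    by (intro sums_diff summable_sums summable_Phi) (use assms in auto)
  from s4 s5 eq have e1: "PP (x + 1) - PP x
     = 2 * AA y / y - (shifted_harm y / y - (zeta_nat 2 - shifted_harm_gen 2 y)) / y + shifted_harm y ^ 2 / y"
    using sums_unique2 by (metis (no_types, lifting) ext)
  have AB: "AA y = shifted_harm y ^ 2 + shifted_harm_gen 2 y"
    using AA_eq_BB[OF y0(2)] by (simp add: BB_def)
  have hx: "shifted_harm x = shifted_harm y - 1 / y" using H_Suc[OF assms] by (simp add: y_def)
  have h2x: "shifted_harm_gen 2 x = shifted_harm_gen 2 y - 1 / y^2" using H2_Suc[OF assms] by (simp add: y_def)
  have "PP (x + 1) - PP x = DD y - DD x + shifted_harm y / y^2"
    unfolding e1 AB DD_def hx h2x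
    using y0 by (simp add: divide_simps) algebra
  thus ?thesis by (simp add: y_def)
qed

lemma PP_shift:
  assumes "x \<ge> 0"
  shows "PP (x + real d) = PP x + DD (x + real d) - DD x
           + (\<Sum>j=1..d. shifted_harm (x + real j) / (x + real j)^2)"
proof (induction d)
  case 0 then show ?case by simp
next
  case (Suc d)
  have e: "x + real (Suc d) = (x + real d) + 1" by simp
  show ?case unfolding e using PP_Suc[of "x + real d"] Suc assms by (simp add: add_ac)
qed


definition FF :: "real \<Rightarrow> nat \<Rightarrow> nat \<Rightarrow> real" where
  "FF \<alpha> m n = shifted_harm (real (Suc n) + \<alpha>)^2 * (1 / (real (Suc n) + real m) - 1 / (real (Suc n) + \<alpha>))"

lemma FF_sums:
  assumes "real m < \<alpha>"
  shows "FF \<alpha> m sums (PP (\<alpha> - real m) + (real m - \<alpha>) *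
           (\<Sum>j=1..m. (shifted_harm (\<alpha> + real j - real m))\<^sup>2 / (real j * (\<alpha> + real j - real m))))"
proof -
  define u where "u k = shifted_harm (real (Suc k) + (\<alpha> - real m))^2 * (1 / real (Suc k) - 1 / (real (Suc k) + (\<alpha> - real m)))" for k
  have su: "summable u" unfolding u_def by (rule summable_Phi) (use assms in simp)
  have shift: "u (n + m) = FF \<alpha> m n" for n
    by (simp add: u_def FF_def algebra_simps)
  have sF: "summable (FF \<alpha> m)"
    using su summable_iff_shift[of u m] shift by simp
  have split: "PP (\<alpha> - real m) = suminf (FF \<alpha> m) + (\<Sum>i<m. u i)"
    unfolding PP_def u_def[symmetric] using suminf_split_initial_segment[OF su, of m] shift by simp
  have ui: "u i = (\<alpha> - real m) * ((shifted_harm (\<alpha> + real (Suc i) - real m))\<^sup>2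
                 / (real (Suc i) * (\<alpha> + real (Suc i) - real m)))" for i
  proof -
    have p: "real (Suc i) + (\<alpha> - real m) > 0" using assms by simp
    have "1 / real (Suc i) - 1 / (real (Suc i) + (\<alpha> - real m)) = (\<alpha> - real m) / (real (Suc i) * (real (Suc i) + (\<alpha> - real m)))"
      using p by (simp add: field_simps)
    thus ?thesis unfolding u_def by (simp add: algebra_simps)
  qed
  have "(\<Sum>i<m. u i) = (\<alpha> - real m) * (\<Sum>j=1..m. (shifted_harm (\<alpha> + real j - real m))\<^sup>2 / (real j * (\<alpha> + real j - real m)))"
    unfolding ui sum_distrib_left[symmetric]
    using sum_bounds_lt_plus1[where f = "\<lambda>j. (shifted_harm (\<alpha> + real j - real m))\<^sup>2 / (real j * (\<alpha> + real j - real m))" and mm = m] by simp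
  with split have "suminf (FF \<alpha> m) = PP (\<alpha> - real m) + (real m - \<alpha>) *
           (\<Sum>j=1..m. (shifted_harm (\<alpha> + real j - real m))\<^sup>2 / (real j * (\<alpha> + real j - real m)))"
    by (simp add: algebra_simps)
  with sF show ?thesis by (simp add: summable_sums_iff)
qed

theorem corollary2p8:
  fixes r k :: nat and \<alpha> :: real
  assumes "r < k" and "real k < \<alpha>"
  shows "(\<Sum>n. (shifted_harm (real (Suc n) + \<alpha>))\<^sup>2 / ((real (Suc n) + real r) * (real (Suc n) + real k)))
    = 1 / (real k - real r) *
      ( (shifted_harm (\<alpha> - r)) ^ 3 + shifted_harm (\<alpha> - r) * shifted_harm_gen 2 (\<alpha> - r)
        + shifted_harm (\<alpha> - r) * zeta_nat 2
        - (shifted_harm (\<alpha> - k)) ^ 3 - shifted_harm (\<alpha> - k) * shifted_harm_gen 2 (\<alpha> - k)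
        - shifted_harm (\<alpha> - k) * zeta_nat 2
        + (real r - \<alpha>) * (\<Sum>j=1..r. (shifted_harm (\<alpha> + j - r))\<^sup>2 / (real j * (\<alpha> + j - r)))
        + (\<Sum>j=1..k - r. shifted_harm (\<alpha> + j - k) / (\<alpha> + j - k)\<^sup>2)
        - (real k - \<alpha>) * (\<Sum>j=1..k. (shifted_harm (\<alpha> + j - k))\<^sup>2 / (real j * (\<alpha> + j - k))) )"
proof -
  have kr: "real k - real r > 0" using assms by simp
  have ar: "real r < \<alpha>" using assms by simp
  define Sr where "Sr = (\<Sum>j=1..r. (shifted_harm (\<alpha> + real j - real r))\<^sup>2 / (real j * (\<alpha> + real j - real r)))"
  define Sk where "Sk = (\<Sum>j=1..k. (shifted_harm (\<alpha> + real j - real k))\<^sup>2 / (real j * (\<alpha> + real j - real k)))"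
  define Sj where "Sj = (\<Sum>j=1..k - r. shifted_harm (\<alpha> + real j - real k) / (\<alpha> + real j - real k)\<^sup>2)"
  have fr: "FF \<alpha> r sums (PP (\<alpha> - real r) + (real r - \<alpha>) * Sr)" unfolding Sr_def by (rule FF_sums[OF ar])
  have fk: "FF \<alpha> k sums (PP (\<alpha> - real k) + (real k - \<alpha>) * Sk)" unfolding Sk_def by (rule FF_sums) (use assms in simp)
  have d: "(\<lambda>n. (FF \<alpha> r n - FF \<alpha> k n) / (real k - real r)) sums
      ((PP (\<alpha> - real r) + (real r - \<alpha>) * Sr - (PP (\<alpha> - real k) + (real k - \<alpha>) * Sk)) / (real k - real r))"
    by (intro sums_divide sums_diff fr fk)
  have pt: "(FF \<alpha> r n - FF \<alpha> k n) / (real k - real r)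
      = (shifted_harm (real (Suc n) + \<alpha>))\<^sup>2 / ((real (Suc n) + real r) * (real (Suc n) + real k))" for n
  proof -
    have n: "real (Suc n) + real r \<noteq> 0" "real (Suc n) + real k \<noteq> 0" "real k - real r \<noteq> 0" "real (Suc n) + \<alpha> \<noteq> 0" using kr ar by simp_all
    show ?thesis unfolding FF_def using n by (simp add: divide_simps) (simp add: algebra_simps)
  qed
  have ps: "PP (\<alpha> - real r) = PP (\<alpha> - real k) + DD (\<alpha> - real r) - DD (\<alpha> - real k) + Sj"
  proof -
    have e: "\<alpha> - real r = (\<alpha> - real k) + real (k - r)" using assms by simp
    have "PP ((\<alpha> - real k) + real (k - r)) = PP (\<alpha> - real k) + DD ((\<alpha> - real k) + real (k - r)) - DD (\<alpha> - real k)
           + (\<Sum>j=1..k - r. shifted_harm ((\<alpha> - real k) + real j) / ((\<alpha> - real k) + real j)^2)"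
      by (rule PP_shift) (use assms in simp)
    moreover have "(\<Sum>j=1..k - r. shifted_harm ((\<alpha> - real k) + real j) / ((\<alpha> - real k) + real j)^2) = Sj"
      unfolding Sj_def by (simp add: algebra_simps)
    ultimately show ?thesis unfolding e[symmetric] by simp
  qed
  have "(\<Sum>n. (shifted_harm (real (Suc n) + \<alpha>))\<^sup>2 / ((real (Suc n) + real r) * (real (Suc n) + real k)))
      = ((PP (\<alpha> - real r) + (real r - \<alpha>) * Sr - (PP (\<alpha> - real k) + (real k - \<alpha>) * Sk)) / (real k - real r))"
    using sums_unique[OF d] pt by simp
  also have "\<dots> = 1 / (real k - real r) * (DD (\<alpha> - real r) - DD (\<alpha> - real k) + (real r - \<alpha>) * Sr + Sj - (real k - \<alpha>) * Sk)"
    unfolding ps by (simp add: field_simps)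
  finally show ?thesis unfolding Sr_def Sk_def Sj_def DD_def by (simp add: algebra_simps)
qed

end
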